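(* $21 \le R_3(L) \le 2593$. In particular, there exists a coloring of $[20]\times[20]$ with 3 colors containing no monochromatic $L$, i.e. no integers $i,j$ and $t\ge 1$ with $(i,j),(i,j+t),(i+t,j+t)\in[20]\times[20]$ all of the same color.
   Context: For $n\in\mathbb{N}$, $[n]=\{1,\dots,n\}$. An $L$ in the grid $[n]\times[n]$ is a set of three lattice points of the form $\{(i,j),(i,j+t),(i+t,j+t)\}$ with $t$ a positive integer. A $c$-coloring of the grid is a function $[n]\times[n]\to[c]$. $R_c(L)$ denotes the least $n$ such that every $c$-coloring of $[n]\times[n]$ contains a monochromatic $L$. *)

theory Defs
  imports Main
begin

definition is_coloring :: "nat \<Rightarrow> nat \<Rightarrow> (nat \<times> nat \<Rightarrow> nat) \<Rightarrow> bool" where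
  "is_coloring c n f \<longleftrightarrow> (\<forall>p \<in> {1..n} \<times> {1..n}. f p \<in> {1..c})"

definition has_mono_L :: "nat \<Rightarrow> (nat \<times> nat \<Rightarrow> nat) \<Rightarrow> bool" where
  "has_mono_L n f \<longleftrightarrow>
     (\<exists>i j t. t \<ge> 1 \<and> (i, j) \<in> {1..n} \<times> {1..n} \<and> (i, j + t) \<in> {1..n} \<times> {1..n}
        \<and> (i + t, j + t) \<in> {1..n} \<times> {1..n}
        \<and> f (i, j) = f (i, j + t) \<and> f (i, j + t) = f (i + t, j + t))"

definition R_L :: "nat \<Rightarrow> nat" where
  "R_L c = (LEAST n. \<forall>f. is_coloring c n f \<longrightarrow> has_mono_L n f)"

end

theory Submission
  imports Defs
begin


lemma pigeon:
  assumes "finite A" "finite B" "g ` A \<subseteq> B" "k * card B < card A"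
  shows "\<exists>b\<in>B. k < card {a\<in>A. g a = b}"
proof (rule ccontr)
  assume "\<not> ?thesis"
  hence le: "\<forall>b\<in>B. card {a\<in>A. g a = b} \<le> k" by auto
  have "A \<subseteq> (\<Union>b\<in>B. {a\<in>A. g a = b})" using assms(3) by auto
  hence "card A \<le> card (\<Union>b\<in>B. {a\<in>A. g a = b})"
    by (intro card_mono) (use assms(1,2) in auto)
  also have "\<dots> \<le> (\<Sum>b\<in>B. card {a\<in>A. g a = b})" by (rule card_UN_le[OF assms(2)])
  also have "\<dots> \<le> (\<Sum>b\<in>B. k)" by (rule sum_mono) (use le in auto)
  also have "\<dots> = k * card B" by simp
  finally show False using assms(4) by simp
qed

lemma pairs_card:
  fixes R :: "nat set"
  assumes "finite R"
  shows "2 * card {(a,b). a\<in>R \<and> b\<in>R \<and> a<b} = card R * (card R - 1)"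
proof -
  define P where "P = {(a,b). a\<in>R \<and> b\<in>R \<and> a<b}"
  have PR: "P \<subseteq> R \<times> R" unfolding P_def by auto
  have fP: "finite P" using PR assms finite_subset by blast
  have eq: "R \<times> R = P \<union> (prod.swap ` P) \<union> ((\<lambda>a. (a,a)) ` R)"
    unfolding P_def by (auto simp: image_iff)
  have d1: "P \<inter> prod.swap ` P = {}" unfolding P_def by auto
  have d2: "(P \<union> prod.swap ` P) \<inter> ((\<lambda>a. (a,a)) ` R) = {}" unfolding P_def by auto
  have cs: "card (prod.swap ` P) = card P" by (simp add: card_image)
  have cd: "card ((\<lambda>a. (a,a)) ` R) = card R" by (simp add: card_image inj_on_def)
  have "card (R \<times> R) = card P + card P + card R"
    unfolding eq using fP assms d1 d2 cs cd
    by (simp add: card_Un_disjoint)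
  hence "card R * card R = 2 * card P + card R" by (simp add: card_cartesian_product)
  thus ?thesis unfolding P_def[symmetric] by (simp add: algebra_simps diff_mult_distrib2)
qed

lemma three:
  fixes u v r b :: nat
  assumes "u \<in> {1..3}" "v \<in> {1..3}" "r \<in> {1..3}" "b \<in> {1..3}"
    "u \<noteq> r" "u \<noteq> b" "v \<noteq> r" "v \<noteq> b" "r \<noteq> b"
  shows "u = v"
proof -
  have e: "{1..3::nat} = {1,2,3}" by auto
  show ?thesis using assms unfolding e by auto
qed

lemma upper:
  assumes "is_coloring 3 2593 f"
  shows "has_mono_L 2593 f"
proof (rule ccontr)
  define n where "n = (2593::nat)"
  assume nL: "\<not> has_mono_L 2593 f"
  have noL: False if "1 \<le> t" "1 \<le> i" "1 \<le> j" "i+t \<le> n" "j+t \<le> n"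
    "f(i,j) = f(i,j+t)" "f(i,j+t) = f(i+t,j+t)" for i j t
    using nL that unfolding has_mono_L_def n_def by fastforce
  have col: "f(i,j) \<in> {1..3}" if "1\<le>i" "i\<le>n" "1\<le>j" "j\<le>n" for i j
    using assms that unfolding is_coloring_def n_def by auto
  obtain r where r: "r \<in> {1..3::nat}" and Rc: "864 < card {k\<in>{1..n}. f(k,k) = r}"
    using pigeon[of "{1..n}" "{1..3}" "\<lambda>k. f(k,k)" 864] col unfolding n_def by fastforce
  define R where "R = {k\<in>{1..n}. f(k,k) = r}"
  have Rm: "1 \<le> k \<and> k \<le> n" if "k \<in> R" for k using that unfolding R_def by auto
  have fR: "finite R" unfolding R_def by auto
  have offr: "f(a,b) \<noteq> r" if "a\<in>R" "b\<in>R" "a<b" for a b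
  proof
    assume h: "f(a,b) = r"
    have "1 \<le> a" "b \<le> n" "f(a,a) = r" "f(b,b) = r" using that unfolding R_def by auto
    thus False using noL[of "b-a" a a] h that by (auto simp: Suc_le_eq)
  qed
  define P where "P = {(a,b). a\<in>R \<and> b\<in>R \<and> a<b}"
  have "2 * card P = card R * (card R - 1)" unfolding P_def by (rule pairs_card[OF fR])
  moreover have "865*864 \<le> card R * (card R - 1)"
    using Rc unfolding R_def[symmetric] by (intro mult_le_mono) auto
  ultimately have cP: "373680 \<le> card P" by simp
  have fP: "finite P"
    by (rule finite_subset[of _ "R \<times> R"]) (auto simp: P_def fR)
  have imgP: "(\<lambda>p. snd p - fst p) ` P \<subseteq> {1..n-1}"
  proof (rule image_subsetI)
    fix p assume "p \<in> P"
    then obtain a b where ab: "p = (a,b)" "a\<in>R" "b\<in>R" "a<b" unfolding P_def by auto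
    moreover have "1 \<le> a" "b \<le> n" using ab Rm by auto
    ultimately show "snd p - fst p \<in> {1..n-1}" by auto
  qed
  obtain \<delta> where \<delta>: "\<delta> \<in> {1..n-1}" and Fc: "144 < card {p\<in>P. snd p - fst p = \<delta>}"
    using pigeon[OF fP _ imgP, of 144] cP unfolding n_def by auto
  define F where "F = {p\<in>P. snd p - fst p = \<delta>}"
  define S where "S = fst ` F"
  have "inj_on fst F" unfolding inj_on_def F_def P_def by auto
  hence cS: "144 < card S" unfolding S_def using Fc F_def card_image by metis
  have Sp: "a \<in> R \<and> a + \<delta> \<in> R" if "a \<in> S" for a
    using that unfolding S_def F_def P_def by auto
  have fS: "finite S" using Sp fR by (meson finite_subset subsetI)
  have d1: "1 \<le> \<delta>" using \<delta> by auto
  have imgS: "(\<lambda>a. f(a,a+\<delta>)) ` S \<subseteq> {1..3} - {r}"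
  proof
    fix c assume "c \<in> (\<lambda>a. f(a,a+\<delta>)) ` S"
    then obtain a where a: "a \<in> S" "c = f(a,a+\<delta>)" by auto
    have "c \<noteq> r" using offr[of a "a+\<delta>"] Sp[OF a(1)] a d1 by auto
    moreover have "c \<in> {1..3}" using col[of a "a+\<delta>"] Sp[OF a(1)] a Rm by auto
    ultimately show "c \<in> {1..3} - {r}" by auto
  qed
  have c2: "card ({1..3::nat} - {r}) = 2" using r by (simp add: card_Diff_singleton)
  have "\<exists>b\<in>{1..3} - {r}. 72 < card {a\<in>S. f(a,a+\<delta>) = b}"
    using pigeon[OF fS _ imgS, of 72] cS c2 by auto
  then obtain bl where bl: "bl \<in> {1..3} - {r}" and S'c: "72 < card {a\<in>S. f(a,a+\<delta>) = bl}"
    by blast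
  define S' where "S' = {a\<in>S. f(a,a+\<delta>) = bl}"
  have S'S: "S' \<subseteq> S" unfolding S'_def by auto
  have green: "f(a,a'+\<delta>) \<in> {1..3} \<and> f(a,a'+\<delta>) \<noteq> r \<and> f(a,a'+\<delta>) \<noteq> bl"
    if "a\<in>S'" "a'\<in>S'" "a<a'" for a a'
  proof (intro conjI)
    have aR: "a \<in> R" "a'+\<delta> \<in> R" "a+\<delta> \<in> R" "a' \<in> R" using that S'S Sp by auto
    show "f(a,a'+\<delta>) \<in> {1..3}" using col[of a "a'+\<delta>"] aR Rm by auto
    show "f(a,a'+\<delta>) \<noteq> r" using offr[of a "a'+\<delta>"] aR that by auto
    show "f(a,a'+\<delta>) \<noteq> bl"
    proof
      assume h: "f(a,a'+\<delta>) = bl"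
      have e1: "f(a,a+\<delta>) = bl" "f(a',a'+\<delta>) = bl" using that unfolding S'_def by auto
      have e2: "a+\<delta>+(a'-a) = a'+\<delta>" "a+(a'-a) = a'" using that by auto
      have "1 \<le> a" "a' \<le> n" "a'+\<delta> \<le> n" using aR Rm by auto
      thus False using noL[of "a'-a" a "a+\<delta>"] h e1 e2 that by (auto simp: Suc_le_eq)
    qed
  qed
  define Q where "Q = {(x,y). x\<in>S' \<and> y\<in>S' \<and> x<y}"
  have fS': "finite S'" using fS S'S finite_subset by blast
  have "2 * card Q = card S' * (card S' - 1)" unfolding Q_def by (rule pairs_card[OF fS'])
  moreover have "73*72 \<le> card S' * (card S' - 1)"
    using S'c unfolding S'_def[symmetric] by (intro mult_le_mono) auto
  ultimately have cQ: "2628 \<le> card Q" by simp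
  have fQ: "finite Q"
    by (rule finite_subset[of _ "S' \<times> S'"]) (auto simp: Q_def fS')
  have imgQ: "(\<lambda>p. snd p - fst p) ` Q \<subseteq> {1..n-1}"
  proof (rule image_subsetI)
    fix p assume "p \<in> Q"
    then obtain a b where ab: "p = (a,b)" "a\<in>S'" "b\<in>S'" "a<b" unfolding Q_def by auto
    moreover have "1 \<le> a" "b \<le> n" using ab Rm S'S Sp by auto
    ultimately show "snd p - fst p \<in> {1..n-1}" by auto
  qed
  obtain d where Gc: "1 < card {p\<in>Q. snd p - fst p = d}"
    using pigeon[OF fQ _ imgQ, of 1] cQ unfolding n_def by auto
  have "finite {p\<in>Q. snd p - fst p = d}" using fQ by auto
  then obtain p q where pq: "p \<in> Q" "q \<in> Q" "p \<noteq> q" "snd p - fst p = snd q - fst q"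
    using Gc card_le_Suc0_iff_eq[of "{p\<in>Q. snd p - fst p = d}"] by auto
  have key: False if "(x,y)\<in>Q" "(z,w)\<in>Q" "y-x = w-z" "x<z" for x y z w
  proof -
    have m: "x\<in>S'" "y\<in>S'" "z\<in>S'" "w\<in>S'" "x<y" "z<w" using that unfolding Q_def by auto
    have g1: "f(x,y+\<delta>) \<in> {1..3} \<and> f(x,y+\<delta>) \<noteq> r \<and> f(x,y+\<delta>) \<noteq> bl" using green m by auto
    have g2: "f(x,w+\<delta>) \<in> {1..3} \<and> f(x,w+\<delta>) \<noteq> r \<and> f(x,w+\<delta>) \<noteq> bl" using green m that by auto
    have g3: "f(z,w+\<delta>) \<in> {1..3} \<and> f(z,w+\<delta>) \<noteq> r \<and> f(z,w+\<delta>) \<noteq> bl" using green m by auto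
    have rb: "r \<noteq> bl" using bl by auto
    have rr: "r \<in> {1..3}" "bl \<in> {1..3}" using r bl by auto
    have eq1: "f(x,y+\<delta>) = f(x,w+\<delta>)" using g1 g2 rb rr three by blast
    have eq2: "f(x,w+\<delta>) = f(z,w+\<delta>)" using g2 g3 rb rr three by blast
    have e: "y+\<delta>+(z-x) = w+\<delta>" "x+(z-x) = z" using that m by auto
    have b: "1 \<le> x" "z \<le> n" "w+\<delta> \<le> n" using m S'S Sp Rm by auto
    show False using noL[of "z-x" x "y+\<delta>"] eq1 eq2 e b d1 that by (auto simp: Suc_le_eq)
  qed
  obtain x y z w where p: "p = (x,y)" and q: "q = (z,w)" by (cases p, cases q) auto
  show False
  proof (cases "x < z")
    case True thus ?thesis using key[of x y z w] pq p q by auto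
  next
    case False
    moreover have "x \<noteq> z"
    proof
      assume "x = z"
      moreover have "x < y" "z < w" using pq p q unfolding Q_def by auto
      ultimately show False using pq p q by auto
    qed
    ultimately have "z < x" by auto
    thus ?thesis using key[of z w x y] pq p q by auto
  qed
qed


definition tbl :: "nat list list" where "tbl = [[2,3,1,2,3,1,1,3,1,2,1,1,2,3,1,2,2,3,3,3],
  [1,1,2,3,1,2,3,3,2,3,1,2,3,1,2,3,3,1,1,1],
  [2,3,3,1,2,3,1,2,3,1,2,3,1,2,3,1,1,2,3,2],
  [1,3,1,1,1,2,3,1,2,2,2,3,1,2,3,1,3,1,2,3],
  [1,1,2,3,2,1,2,3,1,1,3,3,1,2,3,2,1,2,3,3],
  [1,3,3,1,2,2,3,1,1,3,3,2,2,3,1,2,2,3,1,1],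
  [3,2,2,2,3,1,1,2,3,3,2,2,1,1,2,3,3,1,2,2],
  [2,2,1,1,3,2,3,2,3,1,2,3,2,3,1,2,1,2,3,3],
  [1,1,1,3,3,3,1,2,2,2,3,1,2,1,2,3,2,3,1,1],
  [1,3,2,3,2,2,2,3,1,1,1,2,3,1,3,1,3,1,2,2],
  [2,2,3,2,1,1,1,3,2,3,3,1,2,2,1,1,1,2,3,3],
  [1,1,3,2,1,3,3,1,2,1,2,1,3,1,2,3,2,2,1,1],
  [2,2,3,1,3,1,2,3,3,2,3,1,3,2,2,1,3,1,1,2],
  [2,3,2,1,3,3,3,1,2,2,1,2,3,3,3,1,1,2,3,1],
  [3,2,1,2,2,2,2,3,2,3,1,1,1,2,1,2,2,3,1,3],
  [1,3,1,3,3,3,1,2,1,1,1,3,2,3,1,3,3,1,2,1],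
  [2,1,2,1,2,1,3,1,1,2,3,3,2,1,2,3,1,2,3,2],
  [3,1,2,2,1,2,1,2,3,1,3,2,2,2,3,1,1,3,1,3],
  [2,1,1,3,1,3,1,2,1,2,1,3,1,1,3,2,2,3,2,1],
  [2,3,2,3,3,1,3,3,3,3,2,2,1,3,3,2,3,1,2,2]]"
fun noPair :: "nat \<Rightarrow> nat list \<Rightarrow> nat list \<Rightarrow> bool" where
  "noPair c (a#as) (b#bs) = ((a \<noteq> c \<or> b \<noteq> c) \<and> noPair c as bs)"
| "noPair c _ _ = True"
fun walk :: "nat list \<Rightarrow> nat list \<Rightarrow> nat list list \<Rightarrow> bool" where
  "walk lefts [] bs = True"
| "walk lefts (c#cs) bs = (noPair c lefts (map hd bs) \<and> walk (c#lefts) cs (map tl bs))"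
fun chk :: "nat list list \<Rightarrow> bool" where
  "chk [] = True"
| "chk (r#rs) = (walk [] r rs \<and> chk rs)"
lemma chk_tbl: "chk tbl" unfolding tbl_def by simp
lemma len_tbl: "length tbl = 20 \<and> (\<forall>r\<in>set tbl. length r = 20 \<and> (\<forall>x\<in>set r. x \<in> {1..3}))"
  unfolding tbl_def by simp

lemma noPair_nth: "noPair c as bs \<Longrightarrow> t < length as \<Longrightarrow> t < length bs \<Longrightarrow> as!t = c \<Longrightarrow> bs!t = c \<Longrightarrow> False"
  by (induction c as bs arbitrary: t rule: noPair.induct) (auto simp: nth_Cons split: nat.splits)

lemma tl_nth: "b \<noteq> [] \<Longrightarrow> tl b ! k = b ! Suc k" by (cases b) auto

lemma walk_nth: "walk lefts r bs \<Longrightarrow> \<forall>b\<in>set bs. length b = length r \<Longrightarrow> k < length r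
   \<Longrightarrow> noPair (r!k) (rev (take k r) @ lefts) (map (\<lambda>b. b!k) bs)"
proof (induction lefts r bs arbitrary: k rule: walk.induct)
  case (1 lefts bs) then show ?case by simp
next
  case (2 lefts c cs bs)
  have ne: "\<forall>b\<in>set bs. b \<noteq> []" using "2.prems"(2) by auto
  show ?case
  proof (cases k)
    case 0
    have m: "map (\<lambda>b. b!0) bs = map hd bs" using ne by (auto simp: hd_conv_nth)
    show ?thesis using "2.prems"(1) by (simp add: 0 m)
  next
    case (Suc k')
    have w: "walk (c#lefts) cs (map tl bs)" using "2.prems"(1) by simp
    have l: "\<forall>b\<in>set (map tl bs). length b = length cs" using "2.prems"(2) by auto
    have m: "map (\<lambda>b. b!k') (map tl bs) = map (\<lambda>b. b ! Suc k') bs" using ne by (auto simp: tl_nth)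
    have ih: "noPair (cs!k') (rev (take k' cs) @ c # lefts) (map (\<lambda>b. b!k') (map tl bs))"
      using "2.IH"[OF w l, of k'] "2.prems"(3) Suc by simp
    have ih': "noPair (cs!k') (rev (take k' cs) @ c # lefts) (map (\<lambda>b. b!Suc k') bs)"
      using ih unfolding m .
    show ?thesis using ih' Suc by simp
  qed
qed

lemma chk_nth: "chk T \<Longrightarrow> i < length T \<Longrightarrow> walk [] (T!i) (drop (Suc i) T)"
  by (induction T arbitrary: i) (auto simp: nth_Cons split: nat.splits)

definition col20 :: "nat \<times> nat \<Rightarrow> nat" where
  "col20 p = tbl ! (fst p - 1) ! (snd p - 1)"

lemma col20_coloring: "is_coloring 3 20 col20"
  unfolding is_coloring_def
proof
  fix p assume p: "p \<in> {1..(20::nat)} \<times> {1..(20::nat)}"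
  have lt: "length tbl = 20" "\<And>q. q \<in> set tbl \<Longrightarrow> length q = 20 \<and> (\<forall>x\<in>set q. x \<in> {1..3})"
    using len_tbl by auto
  have r: "tbl ! (fst p - 1) \<in> set tbl" using p lt by (auto intro!: nth_mem)
  have "tbl ! (fst p - 1) ! (snd p - 1) \<in> set (tbl ! (fst p - 1))"
    using p lt(2)[OF r] by (auto intro!: nth_mem)
  thus "col20 p \<in> {1..3}" unfolding col20_def using lt(2)[OF r] by blast
qed

lemma col20_noL: "\<not> has_mono_L 20 col20"
proof
  assume "has_mono_L 20 col20"
  then obtain i j t where t: "t \<ge> 1" "1 \<le> i" "1 \<le> j" "i+t \<le> 20" "j+t \<le> 20"
    and e1: "col20 (i,j) = col20 (i,j+t)" and e2: "col20 (i,j+t) = col20 (i+t,j+t)"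
    unfolding has_mono_L_def by auto
  define r where "r = tbl ! (i-1)"
  define k where "k = j+t-1"
  have lt: "length tbl = 20" "\<And>q. q \<in> set tbl \<Longrightarrow> length q = 20" using len_tbl by auto
  have rl: "length r = 20" unfolding r_def using lt t by (auto simp: nth_mem)
  have w: "walk [] r (drop i tbl)" using chk_nth[OF chk_tbl, of "i-1"] t lt unfolding r_def by simp
  have bl: "\<forall>b\<in>set (drop i tbl). length b = length r" using lt rl by (auto dest: in_set_dropD)
  have k20: "k < length r" using t rl unfolding k_def by simp
  have np: "noPair (r!k) (rev (take k r)) (map (\<lambda>b. b!k) (drop i tbl))"
    using walk_nth[OF w bl k20] by simp
  have a1: "rev (take k r) ! (t-1) = r ! (j-1)"
    using t rl unfolding k_def by (simp add: rev_nth)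
  have a2: "map (\<lambda>b. b!k) (drop i tbl) ! (t-1) = tbl ! (i+t-1) ! k"
  proof -
    have "i + (t-1) = i+t-1" using t by simp
    thus ?thesis using t lt by (simp add: nth_drop)
  qed
  have c1: "col20 (i,j) = r ! (j-1)" "col20 (i,j+t) = r ! k" "col20 (i+t,j+t) = tbl ! (i+t-1) ! k"
    unfolding col20_def r_def k_def by auto
  have ar: "t - 1 < k" "k \<le> 20" "t - 1 < 20 - i" using t unfolding k_def by linarith+
  show False
  proof (rule noPair_nth[OF np, of "t-1"])
    show "t-1 < length (rev (take k r))" using ar rl by simp
    show "t-1 < length (map (\<lambda>b. b!k) (drop i tbl))" using ar lt by simp
    show "rev (take k r) ! (t-1) = r!k" using a1 c1 e1 by simp
    show "map (\<lambda>b. b!k) (drop i tbl) ! (t-1) = r!k" using a2 c1 e1 e2 by simp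
  qed
qed

lemma mono_L_mono: "has_mono_L m f \<Longrightarrow> m \<le> n \<Longrightarrow> has_mono_L n f"
  unfolding has_mono_L_def by fastforce

lemma coloring_mono: "is_coloring c n f \<Longrightarrow> m \<le> n \<Longrightarrow> is_coloring c m f"
  unfolding is_coloring_def by auto

theorem theorem3p1:
  shows "21 \<le> R_L 3 \<and> R_L 3 \<le> 2593 \<and> (\<exists>f. is_coloring 3 20 f \<and> \<not> has_mono_L 20 f)"
proof -
  let ?P = "\<lambda>n. \<forall>f. is_coloring 3 n f \<longrightarrow> has_mono_L n f"
  have P: "?P 2593" using upper by blast
  have ub: "R_L 3 \<le> 2593" unfolding R_L_def by (rule Least_le) (rule P)
  have notP: "\<not> ?P m" if "m \<le> 20" for m
  proof
    assume "?P m"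
    hence "has_mono_L m col20" using coloring_mono[OF col20_coloring that] by blast
    thus False using mono_L_mono[OF _ that] col20_noL by blast
  qed
  have lb: "21 \<le> R_L 3"
  proof (rule ccontr)
    assume "\<not> 21 \<le> R_L 3"
    hence "R_L 3 \<le> 20" by simp
    moreover have "?P (R_L 3)" unfolding R_L_def by (rule LeastI[of ?P 2593]) (rule P)
    ultimately show False using notP by blast
  qed
  show ?thesis using lb ub col20_coloring col20_noL by blast
qed

end
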